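(* Let $P$ be a finite $(3+1)$-free poset, decomposed into clone sets $C_1,\dots,C_r$ and tangles $T_1,\dots,T_s$. Then there exists a listing $(X_1,\dots,X_{r+s})$ of the clone sets and tangles of $P$ such that for any two vertices $a\in X_i$ and $b\in X_j$ with $i\neq j$, we have $a<b$ exactly when (i) $\ell(a)\le\ell(b)-2$, or (ii) $\ell(a)=\ell(b)-1$ and $i<j$.
   Context: A poset $P$ is $(3+1)$-free if there are no $a,b,c,d\in P$ with $a<b<c$ and $d$ incomparable to each of $a,b,c$. For $a\in P$ let $D_a=\{x\in P:x<a\}$, $U_a=\{x\in P:x>a\}$. Write $a\mathrel{\top}b$ if neither of $D_a,D_b$ contains the other, $a\mathrel{\bot}b$ if neither of $U_a,U_b$ contains the other, and $a\approx b$ if $D_a=D_b$ and $U_a=U_b$. A top of a tangle is a subset $A\subseteq P$ with $|A|\ge2$ that is a connected component of the graph on $P$ with edges $\{a,b\}$ for $a\mathrel{\top}b$; a bottom of a tangle is defined in the same way using $\bot$. A top $A$ and bottom $B$ are matched if there are distinct $a_1,a_2\in A$, $b_1,b_2\in B$ with $b_1<a_1$, $b_2<a_2$ and the pairs $\{a_1,a_2\},\{b_1,b_2\},\{b_1,a_2\},\{b_2,a_1\}$ incomparable; in a $(3+1)$-free poset this is a perfect matching between tops and bottoms of tangles. A tangle is a matched pair $(A,B)$, identified with the set $A\cup B$. A clone set is an equivalence class of $\approx$ restricted to the vertices lying in no tangle. Levels: $L_1$ is the set of minimal elements of $P$, and $L_{k+1}$ is the set of minimal elements of $P\setminus(L_1\cup\dots\cup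 L_k)$; $\ell(a)$ denotes the index $k$ with $a\in L_k$. *)

theory Defs
  imports Main
begin

definition strict_poset :: "'a set \<Rightarrow> ('a \<Rightarrow> 'a \<Rightarrow> bool) \<Rightarrow> bool" where
  "strict_poset P lt \<longleftrightarrow>
     (\<forall>a\<in>P. \<not> lt a a) \<and>
     (\<forall>a\<in>P. \<forall>b\<in>P. \<forall>c\<in>P. lt a b \<and> lt b c \<longrightarrow> lt a c)"

definition incomp :: "('a \<Rightarrow> 'a \<Rightarrow> bool) \<Rightarrow> 'a \<Rightarrow> 'a \<Rightarrow> bool" where
  "incomp lt a b \<longleftrightarrow> a \<noteq> b \<and> \<not> lt a b \<and> \<not> lt b a"

definition free_3_1 :: "'a set \<Rightarrow> ('a \<Rightarrow> 'a \<Rightarrow> bool) \<Rightarrow> bool" where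
  "free_3_1 P lt \<longleftrightarrow>
     \<not> (\<exists>a\<in>P. \<exists>b\<in>P. \<exists>c\<in>P. \<exists>d\<in>P. lt a b \<and> lt b c \<and>
           incomp lt d a \<and> incomp lt d b \<and> incomp lt d c)"

definition down_set :: "'a set \<Rightarrow> ('a \<Rightarrow> 'a \<Rightarrow> bool) \<Rightarrow> 'a \<Rightarrow> 'a set" where
  "down_set P lt a = {x\<in>P. lt x a}"

definition up_set :: "'a set \<Rightarrow> ('a \<Rightarrow> 'a \<Rightarrow> bool) \<Rightarrow> 'a \<Rightarrow> 'a set" where
  "up_set P lt a = {x\<in>P. lt a x}"

definition top_rel :: "'a set \<Rightarrow> ('a \<Rightarrow> 'a \<Rightarrow> bool) \<Rightarrow> 'a \<Rightarrow> 'a \<Rightarrow> bool" where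
  "top_rel P lt a b \<longleftrightarrow>
     \<not> down_set P lt a \<subseteq> down_set P lt b \<and> \<not> down_set P lt b \<subseteq> down_set P lt a"

definition bot_rel :: "'a set \<Rightarrow> ('a \<Rightarrow> 'a \<Rightarrow> bool) \<Rightarrow> 'a \<Rightarrow> 'a \<Rightarrow> bool" where
  "bot_rel P lt a b \<longleftrightarrow>
     \<not> up_set P lt a \<subseteq> up_set P lt b \<and> \<not> up_set P lt b \<subseteq> up_set P lt a"

definition clone_rel :: "'a set \<Rightarrow> ('a \<Rightarrow> 'a \<Rightarrow> bool) \<Rightarrow> 'a \<Rightarrow> 'a \<Rightarrow> bool" where
  "clone_rel P lt a b \<longleftrightarrow> down_set P lt a = down_set P lt b \<and> up_set P lt a = up_set P lt b"

definition component :: "'a set \<Rightarrow> ('a \<Rightarrow> 'a \<Rightarrow> bool) \<Rightarrow> 'a \<Rightarrow> 'a set" where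
  "component P E a = {b\<in>P. (\<lambda>x y. x \<in> P \<and> y \<in> P \<and> E x y)\<^sup>*\<^sup>* a b}"

definition is_top :: "'a set \<Rightarrow> ('a \<Rightarrow> 'a \<Rightarrow> bool) \<Rightarrow> 'a set \<Rightarrow> bool" where
  "is_top P lt A \<longleftrightarrow> (\<exists>a\<in>P. A = component P (top_rel P lt) a) \<and> card A \<ge> 2"

definition is_bottom :: "'a set \<Rightarrow> ('a \<Rightarrow> 'a \<Rightarrow> bool) \<Rightarrow> 'a set \<Rightarrow> bool" where
  "is_bottom P lt B \<longleftrightarrow> (\<exists>a\<in>P. B = component P (bot_rel P lt) a) \<and> card B \<ge> 2"

definition matched :: "('a \<Rightarrow> 'a \<Rightarrow> bool) \<Rightarrow> 'a set \<Rightarrow> 'a set \<Rightarrow> bool" where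
  "matched lt A B \<longleftrightarrow>
     (\<exists>a1\<in>A. \<exists>a2\<in>A. \<exists>b1\<in>B. \<exists>b2\<in>B. a1 \<noteq> a2 \<and> b1 \<noteq> b2 \<and>
        lt b1 a1 \<and> lt b2 a2 \<and> incomp lt a1 a2 \<and> incomp lt b1 b2 \<and>
        incomp lt b1 a2 \<and> incomp lt b2 a1)"

definition is_tangle :: "'a set \<Rightarrow> ('a \<Rightarrow> 'a \<Rightarrow> bool) \<Rightarrow> 'a set \<Rightarrow> bool" where
  "is_tangle P lt T \<longleftrightarrow>
     (\<exists>A B. is_top P lt A \<and> is_bottom P lt B \<and> matched lt A B \<and> T = A \<union> B)"

definition in_tangle :: "'a set \<Rightarrow> ('a \<Rightarrow> 'a \<Rightarrow> bool) \<Rightarrow> 'a \<Rightarrow> bool" where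
  "in_tangle P lt x \<longleftrightarrow> (\<exists>T. is_tangle P lt T \<and> x \<in> T)"

definition is_clone_set :: "'a set \<Rightarrow> ('a \<Rightarrow> 'a \<Rightarrow> bool) \<Rightarrow> 'a set \<Rightarrow> bool" where
  "is_clone_set P lt C \<longleftrightarrow>
     (\<exists>a\<in>P. \<not> in_tangle P lt a \<and> C = {b\<in>P. \<not> in_tangle P lt b \<and> clone_rel P lt a b})"

text \<open>Levels: lev_union k = L_1 \<union> ... \<union> L_k, where L_(k+1) is the set of minimal elements
  of P minus (L_1 \<union> ... \<union> L_k).\<close>
fun lev_union :: "'a set \<Rightarrow> ('a \<Rightarrow> 'a \<Rightarrow> bool) \<Rightarrow> nat \<Rightarrow> 'a set" where
  "lev_union P lt 0 = {}"
| "lev_union P lt (Suc k) = lev_union P lt k \<union>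
     {a \<in> P - lev_union P lt k. \<not> (\<exists>x \<in> P - lev_union P lt k. lt x a)}"

definition level_set :: "'a set \<Rightarrow> ('a \<Rightarrow> 'a \<Rightarrow> bool) \<Rightarrow> nat \<Rightarrow> 'a set" where
  "level_set P lt k = lev_union P lt k - lev_union P lt (k - 1)"

definition lvl :: "'a set \<Rightarrow> ('a \<Rightarrow> 'a \<Rightarrow> bool) \<Rightarrow> 'a \<Rightarrow> nat" where
  "lvl P lt a = (THE k. k \<ge> 1 \<and> a \<in> level_set P lt k)"

end

theory Submission
  imports Defs "HOL-Library.List_Lexorder"
begin

lemma LX1: "length p = length q \<Longrightarrow> (p < q @ [c::nat] \<longleftrightarrow> p \<le> q)"
proof (induction p arbitrary: q)
  case Nil then show ?case by simp
next
  case (Cons a p) then show ?case by (cases q) auto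
qed

lemma LX3: "length p = length q \<Longrightarrow> (p @ [a] < q @ [b::nat] \<longleftrightarrow> p < q \<or> (p = q \<and> a < b))"
proof (induction p arbitrary: q)
  case Nil then show ?case by simp
next
  case (Cons x p) then show ?case by (cases q) auto
qed

lemma LX2: "q \<noteq> p \<Longrightarrow> q \<noteq> p @ [0] \<Longrightarrow> (p @ [0::nat] < q \<longleftrightarrow> p < q)"
proof (induction p arbitrary: q)
  case Nil then show ?case by (cases q) (auto simp: neq_Nil_conv)
next
  case (Cons x p) then show ?case by (cases q) auto
qed

locale tp =
  fixes P :: "'a set" and lt :: "'a \<Rightarrow> 'a \<Rightarrow> bool"
  assumes fin: "finite P" and spo: "strict_poset P lt" and f31: "free_3_1 P lt"
begin

lemma irr: "x \<in> P \<Longrightarrow> \<not> lt x x"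
  using spo by (auto simp: strict_poset_def)

lemma trans: "x \<in> P \<Longrightarrow> y \<in> P \<Longrightarrow> z \<in> P \<Longrightarrow> lt x y \<Longrightarrow> lt y z \<Longrightarrow> lt x z"
  using spo unfolding strict_poset_def by blast

lemma asym: "x \<in> P \<Longrightarrow> y \<in> P \<Longrightarrow> lt x y \<Longrightarrow> \<not> lt y x"
  using irr trans by blast

lemma no31:
  assumes "a \<in> P" "b \<in> P" "c \<in> P" "d \<in> P" "lt a b" "lt b c"
    "d \<noteq> a" "\<not> lt d a" "\<not> lt a d" "d \<noteq> b" "\<not> lt d b" "\<not> lt b d"
    "d \<noteq> c" "\<not> lt d c" "\<not> lt c d"
  shows False
  using f31 assms unfolding free_3_1_def incomp_def by blast

lemma ex_min: "finite S \<Longrightarrow> S \<noteq> {} \<Longrightarrow> S \<subseteq> P \<Longrightarrow> \<exists>x\<in>S. \<forall>y\<in>S. \<not> lt y x"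
proof (induction S rule: finite_ne_induct)
  case (singleton x) then show ?case using irr by auto
next
  case (insert z F)
  then obtain m where m: "m \<in> F" "\<forall>y\<in>F. \<not> lt y m" by auto
  show ?case
  proof (cases "lt z m")
    case True
    have "\<forall>y\<in>insert z F. \<not> lt y z"
      using True m insert.prems irr trans by (metis insert_iff insert_subset subsetD)
    then show ?thesis by auto
  next
    case False then show ?thesis using m by auto
  qed
qed

abbreviation LU where "LU k \<equiv> lev_union P lt k"

lemma LU_sub: "LU k \<subseteq> P"
  by (induction k) auto

lemma LU_Suc_mono: "LU k \<subseteq> LU (Suc k)"
  by auto

lemma LU_mono: "k \<le> k' \<Longrightarrow> LU k \<subseteq> LU k'"
  using LU_Suc_mono lift_Suc_mono_le[of LU] by blast

lemma LU_grow: "k \<le> card (LU k) \<or> LU k = P"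
proof (induction k)
  case 0 then show ?case by simp
next
  case (Suc k)
  show ?case
  proof (cases "LU k = P")
    case True then show ?thesis using LU_Suc_mono[of k] LU_sub[of "Suc k"] by blast
  next
    case False
    then have ne: "P - LU k \<noteq> {}" using LU_sub[of k] by blast
    obtain m where m: "m \<in> P - LU k" "\<forall>y\<in>P - LU k. \<not> lt y m"
      using ex_min[OF _ ne] fin by blast
    have "m \<in> LU (Suc k)" using m by auto
    then have "LU k \<subset> LU (Suc k)" using m LU_Suc_mono[of k] by blast
    then have "card (LU k) < card (LU (Suc k))"
      using psubset_card_mono fin LU_sub finite_subset by metis
    then show ?thesis using Suc False by simp
  qed
qed

lemma LU_all: "LU (Suc (card P)) = P"
proof -
  have "card (LU (Suc (card P))) \<le> card P" using card_mono[OF fin LU_sub] .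
  then show ?thesis using LU_grow[of "Suc (card P)"] by auto
qed

definition lv :: "'a \<Rightarrow> nat" where "lv x = (LEAST k. x \<in> LU k)"

lemma lv_in: "x \<in> P \<Longrightarrow> x \<in> LU (lv x)"
  unfolding lv_def using LU_all by (metis LeastI)

lemma lv_notin: "x \<in> P \<Longrightarrow> k < lv x \<Longrightarrow> x \<notin> LU k"
  unfolding lv_def using not_less_Least by blast

lemma lv_ge1: "x \<in> P \<Longrightarrow> 1 \<le> lv x"
  using lv_in[of x] by (cases "lv x") auto

lemma lv_le: "x \<in> LU k \<Longrightarrow> lv x \<le> k"
  unfolding lv_def by (rule Least_le)

lemma lvl_eq: assumes "x \<in> P" shows "lvl P lt x = lv x"
proof -
  have "\<And>k. (k \<ge> 1 \<and> x \<in> level_set P lt k) \<longleftrightarrow> k = lv x"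
  proof
    fix k assume k: "k \<ge> 1 \<and> x \<in> level_set P lt k"
    then have "x \<in> LU k" "x \<notin> LU (k - 1)" by (auto simp: level_set_def)
    then show "k = lv x" using lv_le[of x k] lv_in[OF assms] LU_mono[of "lv x" "k - 1"] k by fastforce
  next
    fix k assume "k = lv x"
    then show "k \<ge> 1 \<and> x \<in> level_set P lt k"
      using lv_ge1[OF assms] lv_in[OF assms] lv_notin[OF assms, of "k - 1"]
      by (auto simp: level_set_def)
  qed
  then show ?thesis unfolding lvl_def by simp
qed

lemma LU_Suc_char: "x \<in> LU (Suc k) \<longleftrightarrow> x \<in> LU k \<or> (x \<in> P - LU k \<and> (\<forall>y\<in>P - LU k. \<not> lt y x))"
  by auto

lemma lt_lv: assumes "x \<in> P" "y \<in> P" "lt x y" shows "lv x < lv y"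
proof -
  obtain k where k: "lv y = Suc k" using lv_ge1[OF assms(2)] by (cases "lv y") auto
  have "y \<notin> LU k" using lv_notin[OF assms(2)] k by simp
  then have "\<forall>z\<in>P - LU k. \<not> lt z y" using lv_in[OF assms(2)] k LU_Suc_char by simp
  then have "x \<in> LU k" using assms by blast
  then show ?thesis using lv_le k by fastforce
qed

lemma lv_pred: assumes "y \<in> P" "2 \<le> lv y" shows "\<exists>w\<in>P. lt w y \<and> lv w = lv y - 1"
proof -
  obtain k where k: "lv y = Suc (Suc k)" using assms(2) by (metis add_2_eq_Suc le_Suc_ex)
  have "y \<notin> LU (Suc k)" by (rule lv_notin[OF assms(1)]) (simp add: k)
  moreover have "y \<notin> LU k" by (rule lv_notin[OF assms(1)]) (simp add: k)
  ultimately have "\<not> (\<forall>z\<in>P - LU k. \<not> lt z y)" using assms(1) LU_Suc_char[of y k] by blast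
  then obtain w where w: "w \<in> P - LU k" "lt w y" by blast
  have "lv w > k" using w lv_in[of w] LU_mono[of "lv w" k] by (metis DiffD1 DiffD2 not_le subsetD)
  moreover have "lv w < lv y" using lt_lv w assms(1) by blast
  ultimately show ?thesis using w k by force
qed

lemma lv_far: assumes "x \<in> P" "y \<in> P" "lv x + 2 \<le> lv y" shows "lt x y"
  using assms
proof (induction "lv y" arbitrary: y rule: less_induct)
  case less
  obtain w where w: "w \<in> P" "lt w y" "lv w = lv y - 1" using lv_pred less by fastforce
  show ?case
  proof (cases "lv x + 2 \<le> lv w")
    case True then have "lt x w" using less w by force
    then show ?thesis using trans less w by blast
  next
    case False
    then have lx: "lv x + 2 = lv y" using less w by auto
    obtain v where v: "v \<in> P" "lt v w" "lv v = lv w - 1" using lv_pred[of w] w lx lv_ge1[OF less(2)] by force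
    have lvv: "lv v = lv x" using v w lx by simp
    show ?thesis
    proof (rule ccontr)
      assume nxy: "\<not> lt x y"
      have nxw: "\<not> lt x w" using nxy trans w less by blast
      show False
      proof (cases "x = v")
        case True then show False using nxw v by simp
      next
        case False
        show False
          apply (rule no31[OF v(1) w(1) less(3) less(2) v(2) w(2)])
          using False lvv lt_lv[of x v] lt_lv[of v x] lt_lv[of w x] lt_lv[of y x] nxw nxy v w less lx
          by auto
      qed
    qed
  qed
qed

end

context tp begin

abbreviation up where "up x \<equiv> up_set P lt x"
abbreviation dn where "dn x \<equiv> down_set P lt x"
abbreviation TR where "TR x y \<equiv> top_rel P lt x y"
abbreviation BR where "BR x y \<equiv> bot_rel P lt x y"

definition TT where "TT x \<longleftrightarrow> x \<in> P \<and> (\<exists>y\<in>P. TR x y)"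
definition BB where "BB x \<longleftrightarrow> x \<in> P \<and> (\<exists>y\<in>P. BR x y)"

definition cr where "cr b a b' a' \<longleftrightarrow> b \<in> P \<and> a \<in> P \<and> b' \<in> P \<and> a' \<in> P \<and>
   lt b a \<and> lt b' a' \<and> \<not> lt b a' \<and> \<not> lt b' a"

lemma cr_sym: "cr b a b' a' \<Longrightarrow> cr b' a' b a" by (auto simp: cr_def)

lemma cr_top: "cr b a b' a' \<Longrightarrow> TR a a'"
  by (auto simp: cr_def top_rel_def down_set_def)

lemma cr_bot: "cr b a b' a' \<Longrightarrow> BR b b'"
  by (auto simp: cr_def bot_rel_def up_set_def)

lemma top_cr: "x \<in> P \<Longrightarrow> y \<in> P \<Longrightarrow> TR x y \<Longrightarrow> \<exists>b b'. cr b x b' y"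
  by (auto simp: cr_def top_rel_def down_set_def)

lemma bot_cr: "x \<in> P \<Longrightarrow> y \<in> P \<Longrightarrow> BR x y \<Longrightarrow> \<exists>a a'. cr x a y a'"
  by (auto simp: cr_def bot_rel_def up_set_def)

lemma TR_sym: "TR x y \<Longrightarrow> TR y x" by (auto simp: top_rel_def)
lemma BR_sym: "BR x y \<Longrightarrow> BR y x" by (auto simp: bot_rel_def)

lemma TR_inc: assumes "x \<in> P" "y \<in> P" "TR x y" shows "x \<noteq> y" "\<not> lt x y" "\<not> lt y x"
proof -
  show "x \<noteq> y" using assms by (auto simp: top_rel_def)
  show "\<not> lt x y"
  proof
    assume "lt x y"
    then have "dn x \<subseteq> dn y" using trans[of _ x y] assms unfolding down_set_def by blast
    then show False using assms by (auto simp: top_rel_def)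
  qed
  show "\<not> lt y x"
  proof
    assume "lt y x"
    then have "dn y \<subseteq> dn x" using trans[of _ y x] assms unfolding down_set_def by blast
    then show False using assms by (auto simp: top_rel_def)
  qed
qed

lemma BR_inc: assumes "x \<in> P" "y \<in> P" "BR x y" shows "x \<noteq> y" "\<not> lt x y" "\<not> lt y x"
proof -
  show "x \<noteq> y" using assms by (auto simp: bot_rel_def)
  show "\<not> lt x y"
  proof
    assume "lt x y"
    then have "up y \<subseteq> up x" using trans[of x y] assms unfolding up_set_def by blast
    then show False using assms by (auto simp: bot_rel_def)
  qed
  show "\<not> lt y x"
  proof
    assume "lt y x"
    then have "up x \<subseteq> up y" using trans[of y x] assms unfolding up_set_def by blast
    then show False using assms by (auto simp: bot_rel_def)
  qed
qed

lemma TR_up_sub: assumes "x \<in> P" "y \<in> P" "TR x y" shows "up x \<subseteq> up y"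
proof
  fix u assume u: "u \<in> up x"
  then have uP: "u \<in> P" and xu: "lt x u" by (auto simp: up_set_def)
  show "u \<in> up y"
  proof (rule ccontr)
    assume "u \<notin> up y"
    then have nyu: "\<not> lt y u" using uP by (auto simp: up_set_def)
    obtain b where b: "b \<in> P" "lt b x" "\<not> lt b y" using assms(3) by (auto simp: top_rel_def down_set_def)
    have nyx: "\<not> lt y x" "\<not> lt x y" "x \<noteq> y" using TR_inc[OF assms] by auto
    have nyb: "\<not> lt y b" using trans[of y b x] b assms nyx by blast
    have nuy: "\<not> lt u y" using trans[of x u y] xu uP assms nyx by blast
    have "y \<noteq> b" "y \<noteq> u" using b nyx xu by auto
    show False
      apply (rule no31[OF b(1) assms(1) uP assms(2) b(2) xu])
      using nyb b nyx nyu nuy \<open>y \<noteq> b\<close> \<open>y \<noteq> u\<close> by auto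
  qed
qed

lemma TR_up: "x \<in> P \<Longrightarrow> y \<in> P \<Longrightarrow> TR x y \<Longrightarrow> up x = up y"
  using TR_up_sub TR_sym by blast

lemma BR_dn_sub: assumes "x \<in> P" "y \<in> P" "BR x y" shows "dn x \<subseteq> dn y"
proof
  fix u assume u: "u \<in> dn x"
  then have uP: "u \<in> P" and xu: "lt u x" by (auto simp: down_set_def)
  show "u \<in> dn y"
  proof (rule ccontr)
    assume "u \<notin> dn y"
    then have nyu: "\<not> lt u y" using uP by (auto simp: down_set_def)
    obtain b where b: "b \<in> P" "lt x b" "\<not> lt y b" using assms(3) by (auto simp: bot_rel_def up_set_def)
    have nyx: "\<not> lt y x" "\<not> lt x y" "x \<noteq> y" using BR_inc[OF assms] by auto
    have nyb: "\<not> lt b y" using trans[of x b y] b assms nyx by blast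
    have nuy: "\<not> lt y u" using trans[of y u x] xu uP assms nyx by blast
    have "y \<noteq> b" "y \<noteq> u" using b nyx xu by auto
    show False
      apply (rule no31[OF uP assms(1) b(1) assms(2) xu b(2)])
      using nyb b nyx nyu nuy \<open>y \<noteq> b\<close> \<open>y \<noteq> u\<close> by auto
  qed
qed

lemma BR_dn: "x \<in> P \<Longrightarrow> y \<in> P \<Longrightarrow> BR x y \<Longrightarrow> dn x = dn y"
  using BR_dn_sub BR_sym by blast

lemma TR_lv: assumes "x \<in> P" "y \<in> P" "TR x y" shows "lv x = lv y"
proof -
  have *: "dn a \<subseteq> dn c" if "a \<in> P" "c \<in> P" "lv a < lv c" for a c
  proof
    fix z assume "z \<in> dn a"
    then have "z \<in> P" "lt z a" by (auto simp: down_set_def)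
    then have "lv z + 2 \<le> lv c" using lt_lv[of z a] that by auto
    then show "z \<in> dn c" using lv_far \<open>z \<in> P\<close> that by (auto simp: down_set_def)
  qed
  show ?thesis using *[of x y] *[of y x] assms by (metis linorder_neqE_nat top_rel_def)
qed

lemma BR_lv: assumes "x \<in> P" "y \<in> P" "BR x y" shows "lv x = lv y"
proof -
  have *: "up c \<subseteq> up a" if "a \<in> P" "c \<in> P" "lv a < lv c" for a c
  proof
    fix z assume "z \<in> up c"
    then have "z \<in> P" "lt c z" by (auto simp: up_set_def)
    then have "lv a + 2 \<le> lv z" using lt_lv[of c z] that by auto
    then show "z \<in> up a" using lv_far \<open>z \<in> P\<close> that by (auto simp: up_set_def)
  qed
  show ?thesis using *[of x y] *[of y x] assms by (metis linorder_neqE_nat bot_rel_def)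
qed

lemma TB_excl: "\<not> (TT x \<and> BB x)"
proof
  assume "TT x \<and> BB x"
  then obtain y z where yz: "x \<in> P" "y \<in> P" "z \<in> P" "TR x y" "BR x z" by (auto simp: TT_def BB_def)
  have "up x = up y" using TR_up yz by blast
  have "dn x = dn z" using BR_dn yz by blast
  have "TR z y" using yz \<open>dn x = dn z\<close> by (auto simp: top_rel_def)
  have "BR y z" using yz \<open>up x = up y\<close> by (auto simp: bot_rel_def)
  then have "dn y = dn z" using BR_dn yz by blast
  then show False using \<open>TR z y\<close> by (auto simp: top_rel_def)
qed

end

lemma rtranclp_sym_gen: assumes sy: "\<And>x y. Q x y \<Longrightarrow> Q y x" shows "Q\<^sup>*\<^sup>* a b \<Longrightarrow> Q\<^sup>*\<^sup>* b a"
proof (induction rule: rtranclp_induct)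
  case base then show ?case by simp
next
  case (step y z) then show ?case by (meson converse_rtranclp_into_rtranclp sy)
qed

context tp begin

abbreviation TE where "TE \<equiv> (\<lambda>x y. x \<in> P \<and> y \<in> P \<and> TR x y)"
abbreviation BE where "BE \<equiv> (\<lambda>x y. x \<in> P \<and> y \<in> P \<and> BR x y)"
abbreviation TC where "TC \<equiv> TE\<^sup>*\<^sup>*"
abbreviation BC where "BC \<equiv> BE\<^sup>*\<^sup>*"

lemma TC_sym: "TC a b \<Longrightarrow> TC b a"
  by (rule rtranclp_sym_gen) (auto intro: TR_sym)
lemma BC_sym: "BC a b \<Longrightarrow> BC b a"
  by (rule rtranclp_sym_gen) (auto intro: BR_sym)
lemma TC_trans: "TC a b \<Longrightarrow> TC b c \<Longrightarrow> TC a c" by (rule rtranclp_trans)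
lemma BC_trans: "BC a b \<Longrightarrow> BC b c \<Longrightarrow> BC a c" by (rule rtranclp_trans)
lemma TC_e: "x \<in> P \<Longrightarrow> y \<in> P \<Longrightarrow> TR x y \<Longrightarrow> TC x y" by (rule r_into_rtranclp) simp
lemma BC_e: "x \<in> P \<Longrightarrow> y \<in> P \<Longrightarrow> BR x y \<Longrightarrow> BC x y" by (rule r_into_rtranclp) simp

lemma TC_P: "TC x y \<Longrightarrow> x \<in> P \<Longrightarrow> y \<in> P"
  by (induction rule: rtranclp_induct) auto
lemma BC_P: "BC x y \<Longrightarrow> x \<in> P \<Longrightarrow> y \<in> P"
  by (induction rule: rtranclp_induct) auto

lemma TC_up: "TC x y \<Longrightarrow> x \<in> P \<Longrightarrow> up x = up y"
  by (induction rule: rtranclp_induct) (auto dest: TR_up)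
lemma TC_lv: "TC x y \<Longrightarrow> x \<in> P \<Longrightarrow> lv x = lv y"
  by (induction rule: rtranclp_induct) (auto dest: TR_lv)
lemma BC_dn: "BC x y \<Longrightarrow> x \<in> P \<Longrightarrow> dn x = dn y"
  by (induction rule: rtranclp_induct) (auto dest: BR_dn)
lemma BC_lv: "BC x y \<Longrightarrow> x \<in> P \<Longrightarrow> lv x = lv y"
  by (induction rule: rtranclp_induct) (auto dest: BR_lv)

lemma TC_TT: "TC x y \<Longrightarrow> TT x \<Longrightarrow> TT y"
proof (induction rule: rtranclp_induct)
  case base then show ?case .
next
  case (step y z) then show ?case using TR_sym by (auto simp: TT_def)
qed
lemma BC_BB: "BC x y \<Longrightarrow> BB x \<Longrightarrow> BB y"
proof (induction rule: rtranclp_induct)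
  case base then show ?case .
next
  case (step y z) then show ?case using BR_sym by (auto simp: BB_def)
qed

lemma U1: assumes c1: "cr b1 a b2 a2" and c2: "cr c1 a c2 a3" shows "BC b1 c1"
proof -
  have P: "b1 \<in> P" "b2 \<in> P" "c1 \<in> P" "c2 \<in> P" "a \<in> P" "a2 \<in> P" "a3 \<in> P"
    using c1 c2 by (auto simp: cr_def)
  have f: "a \<in> up b1" "a2 \<notin> up b1" "a2 \<in> up b2" "a \<notin> up b2"
          "a \<in> up c1" "a3 \<notin> up c1" "a3 \<in> up c2" "a \<notin> up c2"
    using c1 c2 by (auto simp: cr_def up_set_def)
  have e1: "BC b1 b2" "BC c1 c2" using BC_e cr_bot c1 c2 P by auto
  show ?thesis
  proof (cases "up b2 \<subseteq> up c1")
    case False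
    then have "BR b2 c1" using f by (auto simp: bot_rel_def)
    then show ?thesis using e1 BC_e P BC_trans by meson
  next
    case True
    show ?thesis
    proof (cases "up b1 \<subseteq> up c1")
      case False
      then have "BR b1 c1" using f True by (auto simp: bot_rel_def)
      then show ?thesis using BC_e P by auto
    next
      case T2: True
      show ?thesis
      proof (cases "up c2 \<subseteq> up b1")
        case False
        then have "BR b1 c2" using f by (auto simp: bot_rel_def)
        then show ?thesis using e1 BC_e P BC_trans BC_sym by meson
      next
        case True then show ?thesis using T2 f by auto
      qed
    qed
  qed
qed

lemma U2: assumes c1: "cr b a1 b2 a2" and c2: "cr b a3 c2 a4" shows "TC a1 a3"
proof -
  have P: "b \<in> P" "b2 \<in> P" "c2 \<in> P" "a1 \<in> P" "a2 \<in> P" "a3 \<in> P" "a4 \<in> P"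
    using c1 c2 by (auto simp: cr_def)
  have f: "b \<in> dn a1" "b2 \<notin> dn a1" "b2 \<in> dn a2" "b \<notin> dn a2"
          "b \<in> dn a3" "c2 \<notin> dn a3" "c2 \<in> dn a4" "b \<notin> dn a4"
    using c1 c2 by (auto simp: cr_def down_set_def)
  have e1: "TC a1 a2" "TC a3 a4" using TC_e cr_top c1 c2 P by auto
  show ?thesis
  proof (cases "dn a2 \<subseteq> dn a3")
    case False
    then have "TR a2 a3" using f by (auto simp: top_rel_def)
    then show ?thesis using e1 TC_e P TC_trans by meson
  next
    case True
    show ?thesis
    proof (cases "dn a1 \<subseteq> dn a3")
      case False
      then have "TR a1 a3" using f True by (auto simp: top_rel_def)
      then show ?thesis using TC_e P by auto
    next
      case T2: True
      show ?thesis
      proof (cases "dn a4 \<subseteq> dn a1")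
        case False
        then have "TR a1 a4" using f by (auto simp: top_rel_def)
        then show ?thesis using e1 TC_e P TC_trans TC_sym by meson
      next
        case True then show ?thesis using T2 f by auto
      qed
    qed
  qed
qed

lemma U1': assumes "TC a a'" "cr b1 a b2 a2" shows "cr c1 a' c2 a3 \<Longrightarrow> BC b1 c1"
  using assms(1)
proof (induction arbitrary: c1 c2 a3 rule: rtranclp_induct)
  case base then show ?case using U1 assms(2) by blast
next
  case (step y z)
  obtain d d' where d: "cr d y d' z" using top_cr step(2) by blast
  have "BC b1 d" using step.IH d by blast
  moreover have "BC d d'" using d cr_bot BC_e by (auto simp: cr_def)
  moreover have "BC d' c1" using U1[OF cr_sym[OF d] step.prems] .
  ultimately show ?case using BC_trans by blast
qed

lemma U2': assumes "BC b b'" "cr b a1 b2 a2" shows "cr b' a3 c2 a4 \<Longrightarrow> TC a1 a3"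
  using assms(1)
proof (induction arbitrary: a3 c2 a4 rule: rtranclp_induct)
  case base then show ?case using U2 assms(2) by blast
next
  case (step y z)
  obtain d d' where d: "cr y d z d'" using bot_cr step(2) by blast
  have "TC a1 d" using step.IH d by blast
  moreover have "TC d d'" using d cr_top TC_e by (auto simp: cr_def)
  moreover have "TC d' a3" using U2[OF cr_sym[OF d] step.prems] .
  ultimately show ?case using TC_trans by blast
qed

end

context tp begin

definition bt where "bt x = (SOME b. \<exists>b' a'. cr b x b' a')"
definition at where "at x = (SOME a. \<exists>b' a'. cr x a b' a')"
definition tcs where "tcs x = {y\<in>P. TC x y}"
definition bcs where "bcs x = {y\<in>P. BC x y}"
definition pt where "pt x = (if TT x then tcs x \<union> bcs (bt x) else if BB x then tcs (at x) \<union> bcs x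
   else {b\<in>P. \<not> TT b \<and> \<not> BB b \<and> clone_rel P lt x b})"

lemma TT_P: "TT x \<Longrightarrow> x \<in> P" by (simp add: TT_def)
lemma BB_P: "BB x \<Longrightarrow> x \<in> P" by (simp add: BB_def)

lemma bt_cr: "TT x \<Longrightarrow> \<exists>b' a'. cr (bt x) x b' a'"
proof -
  assume "TT x"
  then obtain y where "y \<in> P" "TR x y" "x \<in> P" by (auto simp: TT_def)
  then have "\<exists>b b' a'. cr b x b' a'" using top_cr by blast
  then show ?thesis unfolding bt_def by (rule someI_ex)
qed

lemma at_cr: "BB x \<Longrightarrow> \<exists>b' a'. cr x (at x) b' a'"
proof -
  assume "BB x"
  then obtain y where "y \<in> P" "BR x y" "x \<in> P" by (auto simp: BB_def)
  then have "\<exists>a b' a'. cr x a b' a'" using bot_cr by blast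
  then show ?thesis unfolding at_def by (rule someI_ex)
qed

lemma cr_TB: "cr b a b' a' \<Longrightarrow> TT a \<and> TT a' \<and> BB b \<and> BB b'"
  using cr_top cr_bot TR_sym BR_sym by (auto simp: cr_def TT_def BB_def) blast+

lemma tcs_eq: "TC x y \<Longrightarrow> tcs x = tcs y"
  unfolding tcs_def using TC_sym TC_trans by blast
lemma bcs_eq: "BC x y \<Longrightarrow> bcs x = bcs y"
  unfolding bcs_def using BC_sym BC_trans by blast

lemma pt_sub: "pt x \<subseteq> P" by (auto simp: pt_def tcs_def bcs_def)

lemma pt_mem: "x \<in> P \<Longrightarrow> x \<in> pt x"
  by (auto simp: pt_def tcs_def bcs_def clone_rel_def)

lemma pt_eq: assumes xP: "x \<in> P" and y: "y \<in> pt x" shows "pt y = pt x"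
proof -
  have yP: "y \<in> P" using y pt_sub by blast
  show ?thesis
  proof (cases "TT x")
    case TTx: True
    obtain b2 a2 where cx: "cr (bt x) x b2 a2" using bt_cr TTx by blast
    show ?thesis
    proof (cases "y \<in> tcs x")
      case True
      then have TCxy: "TC x y" by (simp add: tcs_def)
      then have TTy: "TT y" using TC_TT TTx by blast
      obtain c2 a3 where cy: "cr (bt y) y c2 a3" using bt_cr TTy by blast
      have "BC (bt x) (bt y)" using U1'[OF TCxy cx cy] .
      then show ?thesis using TTx TTy tcs_eq[OF TCxy] bcs_eq by (simp add: pt_def)
    next
      case False
      then have "y \<in> bcs (bt x)" using y TTx by (simp add: pt_def)
      then have BCy: "BC (bt x) y" by (simp add: bcs_def)
      have "BB (bt x)" using cx cr_TB by blast
      then have BBy: "BB y" using BC_BB BCy by blast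
      then have nTTy: "\<not> TT y" using TB_excl by blast
      obtain c2 a4 where cy: "cr y (at y) c2 a4" using at_cr BBy by blast
      have "TC x (at y)" using U2'[OF BCy cx cy] .
      then show ?thesis using TTx BBy nTTy tcs_eq bcs_eq[OF BCy] by (simp add: pt_def)
    qed
  next
    case nTTx: False
    show ?thesis
    proof (cases "BB x")
      case BBx: True
      obtain b2 a2 where cx: "cr x (at x) b2 a2" using at_cr BBx by blast
      show ?thesis
      proof (cases "y \<in> tcs (at x)")
        case True
        then have TCy: "TC (at x) y" by (simp add: tcs_def)
        have "TT (at x)" using cx cr_TB by blast
        then have TTy: "TT y" using TC_TT TCy by blast
        obtain c2 a3 where cy: "cr (bt y) y c2 a3" using bt_cr TTy by blast
        have "BC x (bt y)" using U1'[OF TCy cx cy] .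
        then show ?thesis using nTTx BBx TTy tcs_eq[OF TCy] bcs_eq by (simp add: pt_def)
      next
        case False
        then have "y \<in> bcs x" using y nTTx BBx by (simp add: pt_def)
        then have BCy: "BC x y" by (simp add: bcs_def)
        then have BBy: "BB y" using BC_BB BBx by blast
        then have nTTy: "\<not> TT y" using TB_excl by blast
        obtain c2 a4 where cy: "cr y (at y) c2 a4" using at_cr BBy by blast
        have "TC (at x) (at y)" using U2'[OF BCy cx cy] .
        then show ?thesis using nTTx BBx BBy nTTy tcs_eq bcs_eq[OF BCy] by (simp add: pt_def)
      qed
    next
      case nBBx: False
      then have yc: "\<not> TT y" "\<not> BB y" "clone_rel P lt x y" using y nTTx by (auto simp: pt_def)
      then show ?thesis using nTTx nBBx by (auto simp: pt_def clone_rel_def)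
    qed
  qed
qed

lemma pt_TT: assumes "pt x = pt y" "TT x" "TT y" shows "TC x y"
proof -
  have "y \<in> pt y" using pt_mem TT_P assms(3) by blast
  then have "y \<in> pt x" using assms(1) by simp
  moreover have "y \<notin> bcs (bt x)"
  proof
    assume "y \<in> bcs (bt x)"
    then have "BC (bt x) y" by (simp add: bcs_def)
    moreover have "BB (bt x)" using bt_cr assms(2) cr_TB by blast
    ultimately have "BB y" using BC_BB by blast
    then show False using TB_excl assms by blast
  qed
  ultimately show ?thesis using assms by (simp add: pt_def tcs_def)
qed

lemma pt_BB: assumes "pt x = pt y" "BB x" "BB y" shows "BC x y"
proof -
  have "y \<in> pt y" using pt_mem BB_P[OF assms(3)] by blast
  then have y: "y \<in> pt x" using assms(1) by simp
  have nT: "\<not> TT x" using TB_excl assms by blast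
  have "y \<notin> tcs (at x)"
  proof
    assume "y \<in> tcs (at x)"
    then have "TC (at x) y" by (simp add: tcs_def)
    moreover have "TT (at x)" using at_cr assms(2) cr_TB by blast
    ultimately have "TT y" using TC_TT by blast
    then show False using TB_excl assms by blast
  qed
  moreover have "pt x = tcs (at x) \<union> bcs x" using nT assms(2) by (simp add: pt_def)
  ultimately show ?thesis using y by (simp add: bcs_def)
qed

lemma pt_cl: assumes "x \<in> P" "\<not> TT x" "\<not> BB x" "pt x = pt y" "y \<in> P"
  shows "\<not> TT y \<and> \<not> BB y \<and> clone_rel P lt x y"
proof -
  have "y \<in> pt y" using pt_mem assms(5) by blast
  then have "y \<in> pt x" using assms(4) by simp
  then show ?thesis using assms(2,3) by (simp add: pt_def)
qed

lemma TC_pt: assumes "TC x y" "TT x" shows "pt x = pt y"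
proof -
  have "y \<in> P" using TC_P[OF assms(1) TT_P[OF assms(2)]] .
  then have "y \<in> tcs x" using assms(1) by (simp add: tcs_def)
  then have "y \<in> pt x" using assms(2) by (simp add: pt_def)
  then show ?thesis using pt_eq[of x y] TT_P[OF assms(2)] by simp
qed

lemma BC_pt: assumes "BC x y" "BB x" shows "pt x = pt y"
proof -
  have "\<not> TT x" using TB_excl assms by blast
  have "y \<in> P" using BC_P[OF assms(1) BB_P[OF assms(2)]] .
  then have "y \<in> bcs x" using assms(1) by (simp add: bcs_def)
  then have "y \<in> pt x" using assms(2) \<open>\<not> TT x\<close> by (simp add: pt_def)
  then show ?thesis using pt_eq[of x y] BB_P[OF assms(2)] by simp
qed

lemma pt_cr: assumes c: "cr b a b' a'" shows "pt b = pt a"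
proof -
  have TTa: "TT a" using c cr_TB by blast
  obtain b2 a2 where ca: "cr (bt a) a b2 a2" using bt_cr TTa by blast
  have "BC (bt a) b" using U1[OF ca c] .
  then have "b \<in> pt a" using TTa c by (auto simp: pt_def bcs_def cr_def)
  then show ?thesis using pt_eq[of a b] TT_P[OF TTa] by simp
qed

lemma pt_TR: assumes "x \<in> P" "y \<in> P" "TR x y" shows "pt x = pt y"
proof -
  have "TT x" using assms by (auto simp: TT_def)
  then show ?thesis using TC_pt[OF TC_e[OF assms]] by simp
qed

lemma pt_BR: assumes "x \<in> P" "y \<in> P" "BR x y" shows "pt x = pt y"
proof -
  have "BB x" using assms by (auto simp: BB_def)
  then show ?thesis using BC_pt[OF BC_e[OF assms]] by simp
qed

lemma bt_props: assumes "TT x"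
  shows "bt x \<in> P" "lt (bt x) x" "BB (bt x)" "pt (bt x) = pt x" "lv (bt x) + 1 = lv x"
    "\<exists>a2\<in>P. TR x a2 \<and> \<not> lt (bt x) a2 \<and> (\<exists>b'. BB b' \<and> pt b' = pt x \<and> lt b' a2 \<and> \<not> lt b' x)"
proof -
  obtain b2 a2 where c: "cr (bt x) x b2 a2" using bt_cr assms by blast
  show "bt x \<in> P" "lt (bt x) x" "BB (bt x)" "pt (bt x) = pt x" using c cr_TB pt_cr by (auto simp: cr_def)
  have "TR x a2" using cr_top c by blast
  moreover have "pt b2 = pt x"
  proof -
    have "pt b2 = pt a2" using pt_cr[OF cr_sym[OF c]] .
    moreover have "pt x = pt a2" using pt_TR[of x a2] c \<open>TR x a2\<close> by (simp add: cr_def)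
    ultimately show ?thesis by simp
  qed
  moreover have "BB b2" using cr_TB[OF c] by blast
  ultimately show "\<exists>a2\<in>P. TR x a2 \<and> \<not> lt (bt x) a2 \<and> (\<exists>b'. BB b' \<and> pt b' = pt x \<and> lt b' a2 \<and> \<not> lt b' x)"
    using c unfolding cr_def by blast
  have l1: "lv (bt x) < lv x" using c lt_lv by (auto simp: cr_def)
  have "lv a2 = lv x" using TR_lv[of x a2] \<open>TR x a2\<close> c by (simp add: cr_def)
  moreover have "\<not> lv (bt x) + 2 \<le> lv a2" using lv_far c by (auto simp: cr_def)
  ultimately show "lv (bt x) + 1 = lv x" using l1 by linarith
qed

lemma TT_ex: assumes "TT a"
  shows "\<exists>b. BB b \<and> pt b = pt a \<and> lt b a" "\<exists>b. BB b \<and> pt b = pt a \<and> \<not> lt b a"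
  using bt_props[OF assms] by blast+

lemma BB_ex: assumes "BB b"
  shows "\<exists>a. TT a \<and> pt a = pt b \<and> lt b a" "\<exists>a. TT a \<and> pt a = pt b \<and> \<not> lt b a"
proof -
  obtain b2 a2 where c: "cr b (at b) b2 a2" using at_cr assms by blast
  have "TT (at b)" using cr_TB[OF c] by blast
  moreover have "pt b = pt (at b)" using pt_cr[OF c] .
  moreover have "lt b (at b)" using c by (simp add: cr_def)
  ultimately show "\<exists>a. TT a \<and> pt a = pt b \<and> lt b a" by metis
  have "pt (at b) = pt a2" using pt_TR[of "at b" a2] cr_top[OF c] c by (simp add: cr_def)
  then have "pt a2 = pt b" using \<open>pt b = pt (at b)\<close> by simp
  moreover have "TT a2" using cr_TB[OF c] by blast
  ultimately show "\<exists>a. TT a \<and> pt a = pt b \<and> \<not> lt b a" using c unfolding cr_def by blast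
qed

lemma TC_pt': "TC x y \<Longrightarrow> x \<in> P \<Longrightarrow> pt x = pt y"
proof (induction rule: rtranclp_induct)
  case base then show ?case by simp
next
  case (step y z) then show ?case using pt_TR[of y z] by simp
qed

lemma BC_pt': "BC x y \<Longrightarrow> x \<in> P \<Longrightarrow> pt x = pt y"
proof (induction rule: rtranclp_induct)
  case base then show ?case by simp
next
  case (step y z) then show ?case using pt_BR[of y z] by simp
qed

lemma UT: assumes "TC y y'" "y \<in> P" "z \<in> P" "pt z \<noteq> pt y" "lt z y" shows "lt z y'"
  using assms(1)
proof (induction rule: rtranclp_induct)
  case base then show ?case using assms by simp
next
  case (step w w')
  have ptw: "pt w = pt y" using TC_pt'[OF step(1) assms(2)] by simp
  show ?case
  proof (rule ccontr)
    assume nz: "\<not> lt z w'"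
    obtain b2 where b2: "b2 \<in> P" "lt b2 w'" "\<not> lt b2 w" using step(2) by (auto simp: top_rel_def down_set_def)
    have "cr z w b2 w'" using b2 nz step assms by (auto simp: cr_def)
    then show False using pt_cr ptw assms(4) by metis
  qed
qed

lemma UB: assumes "BC w w'" "w \<in> P" "y \<in> P" "pt y \<noteq> pt w" "lt w y" shows "lt w' y"
  using assms(1)
proof (induction rule: rtranclp_induct)
  case base then show ?case using assms by simp
next
  case (step v v')
  have ptv: "pt v = pt w" using BC_pt'[OF step(1) assms(2)] by simp
  show ?case
  proof (rule ccontr)
    assume nz: "\<not> lt v' y"
    obtain a2 where a2: "a2 \<in> P" "lt v' a2" "\<not> lt v a2" using step(2) by (auto simp: bot_rel_def up_set_def)
    have "cr v y v' a2" using a2 nz step assms by (auto simp: cr_def)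
    then show False using pt_cr ptv assms(4) by metis
  qed
qed

lemma SP_TT: "pt x = pt y \<Longrightarrow> TT x \<Longrightarrow> TT y \<Longrightarrow> lv x = lv y \<and> up x = up y"
  using pt_TT TC_lv TC_up TT_P by blast

lemma SP_BB: "pt x = pt y \<Longrightarrow> BB x \<Longrightarrow> BB y \<Longrightarrow> lv x = lv y \<and> dn x = dn y"
  using pt_BB BC_lv BC_dn BB_P by blast

lemma SP_TB: assumes "pt x = pt y" "TT x" "BB y" shows "lv x = lv y + 1"
proof -
  have "pt (bt x) = pt y" using bt_props assms by simp
  then have "lv (bt x) = lv y" using SP_BB bt_props assms by blast
  then show ?thesis using bt_props(5)[OF assms(2)] by simp
qed

lemma SP_lv: assumes "x \<in> P" "y \<in> P" "pt x = pt y" "lv x = lv y"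
  shows "(TT x \<longleftrightarrow> TT y) \<and> (BB x \<longleftrightarrow> BB y)"
proof -
  have a: "\<not> TT x \<and> \<not> BB x \<longleftrightarrow> \<not> TT y \<and> \<not> BB y"
    using pt_cl[of x y] pt_cl[of y x] assms by auto
  have b: "\<not> (TT x \<and> BB y)" using SP_TB assms by force
  have c: "\<not> (TT y \<and> BB x)" using SP_TB[of y x] assms by force
  show ?thesis using a b c TB_excl by blast
qed

lemma SP_up: assumes "x \<in> P" "w \<in> P" "y \<in> P" "pt x = pt w" "lv x = lv w" "lt w y" "pt y \<noteq> pt w"
  shows "lt x y"
proof -
  consider "TT x" "TT w" | "BB x" "BB w" | "\<not> TT w" "\<not> BB w" using SP_lv assms by blast
  then show ?thesis
  proof cases
    case 1
    have "up x = up w" using SP_TT[of x w] 1 assms(4) by simp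
    moreover have "y \<in> up w" using assms by (simp add: up_set_def)
    ultimately show ?thesis unfolding up_set_def by blast
  next
    case 2
    have "BC w x" using pt_BB[of w x] 2 assms(4) by simp
    then show ?thesis using UB[of w x y] assms by simp
  next
    case 3 then have "clone_rel P lt w x" using pt_cl[of w x] assms by simp
    then have "up x = up w" by (simp add: clone_rel_def)
    moreover have "y \<in> up w" using assms by (simp add: up_set_def)
    ultimately show ?thesis unfolding up_set_def by blast
  qed
qed

end

context tp begin

definition Apart where "Apart x = {y\<in>P. TT y \<and> pt y = pt x}"
definition V where "V x = (if BB x then up x \<union> Apart x else up x)"
definition cc where "cc x = (if TT x then 0 else if BB x then 2 * (card P - card (V x)) + 1
   else 2 * (card P - card (V x)))"
definition Dn where "Dn x = {w\<in>P. lt w x \<and> lv w + 1 = lv x}"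

primrec kk :: "nat \<Rightarrow> 'a \<Rightarrow> nat list" where
  "kk 0 x = []"
| "kk (Suc j) x = (if TT x then kk j (bt x) @ [0]
     else (if j = 0 then [] else Max (kk j ` Dn x)) @ [cc x])"

definition key where "key x = kk (lv x) x"
definition m where "m x = (if TT x then key (bt x) else if lv x = 1 then [] else Max (key ` Dn x))"

lemma Dn_fin: "finite (Dn x)" using fin by (simp add: Dn_def)

lemma Dn_ne: "x \<in> P \<Longrightarrow> 2 \<le> lv x \<Longrightarrow> Dn x \<noteq> {}"
  using lv_pred[of x] by (force simp: Dn_def)

lemma key_eq: assumes "x \<in> P" shows "key x = m x @ [cc x]"
proof -
  obtain j where j: "lv x = Suc j" using lv_ge1[OF assms] by (cases "lv x") auto
  show ?thesis
  proof (cases "TT x")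
    case True
    have "lv (bt x) = j" using bt_props(5)[OF True] j by simp
    then show ?thesis using True j by (simp add: key_def m_def cc_def)
  next
    case False
    have "kk j ` Dn x = key ` Dn x"
      by (rule image_cong) (auto simp: Dn_def key_def j)
    then show ?thesis using False j by (simp add: key_def m_def)
  qed
qed

lemma key_len: "x \<in> P \<Longrightarrow> length (key x) = lv x"
proof (induction "lv x" arbitrary: x rule: less_induct)
  case less
  show ?case
  proof (cases "TT x")
    case True
    have "length (key (bt x)) = lv (bt x)" using less bt_props[OF True] by simp
    then show ?thesis using key_eq[OF less(2)] True bt_props(5)[OF True] by (simp add: m_def)
  next
    case nT: False
    show ?thesis
    proof (cases "lv x = 1")
      case True then show ?thesis using key_eq[OF less(2)] nT by (simp add: m_def)
    next
      case False
      then have "2 \<le> lv x" using lv_ge1[OF less(2)] by simp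
      then have ne: "Dn x \<noteq> {}" using Dn_ne less by blast
      have "Max (key ` Dn x) \<in> key ` Dn x" using ne Dn_fin by simp
      then obtain w where w: "w \<in> Dn x" "Max (key ` Dn x) = key w" by auto
      have "length (key w) = lv w" using less w by (simp add: Dn_def)
      then show ?thesis using key_eq[OF less(2)] nT False w by (simp add: m_def Dn_def)
    qed
  qed
qed

lemma m_len: "x \<in> P \<Longrightarrow> length (m x) + 1 = lv x"
  using key_eq key_len by (metis length_append_singleton Suc_eq_plus1)

lemma m_max: assumes "x \<in> P" "\<not> TT x" "2 \<le> lv x"
  shows "\<exists>w\<in>Dn x. m x = key w" "\<And>w. w \<in> Dn x \<Longrightarrow> key w \<le> m x"
proof -
  have ne: "Dn x \<noteq> {}" using Dn_ne assms by blast
  have mm: "m x = Max (key ` Dn x)" using assms by (simp add: m_def)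
  have "Max (key ` Dn x) \<in> key ` Dn x" using ne Dn_fin by simp
  then show "\<exists>w\<in>Dn x. m x = key w" using mm by auto
  show "\<And>w. w \<in> Dn x \<Longrightarrow> key w \<le> m x" using Max_ge Dn_fin mm by simp
qed

lemma Apart_sub: "Apart x \<subseteq> P" by (auto simp: Apart_def)
lemma V_sub: "V x \<subseteq> P" using Apart_sub by (auto simp: V_def up_set_def)
lemma V_notin: "x \<in> P \<Longrightarrow> \<not> TT x \<Longrightarrow> x \<notin> V x"
  using irr by (auto simp: V_def up_set_def Apart_def)
lemma V_card: assumes "x \<in> P" "\<not> TT x" shows "card (V x) < card P"
proof -
  have "V x \<subset> P" using V_sub V_notin[OF assms] assms(1) by blast
  then show ?thesis by (rule psubset_card_mono[OF fin])
qed

lemma cc_pos: assumes "x \<in> P" "\<not> TT x" shows "1 \<le> cc x"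
  using V_card[OF assms] assms(2) by (auto simp: cc_def)

lemma dn_lv: assumes "x \<in> P" "y \<in> P" "dn x \<subseteq> dn y" shows "lv x \<le> lv y"
proof (cases "2 \<le> lv x")
  case True
  then obtain w where "w \<in> P" "lt w x" "lv w = lv x - 1" using lv_pred assms by blast
  then have "lt w y" using assms by (auto simp: down_set_def)
  then show ?thesis using lt_lv \<open>w \<in> P\<close> assms \<open>lv w = lv x - 1\<close> True by fastforce
next
  case False then show ?thesis using lv_ge1 assms by fastforce
qed

lemma KP: assumes "x \<in> P" "y \<in> P" "pt x = pt y" "\<not> TT x" "\<not> TT y" shows "key x = key y"
proof -
  have d: "dn x = dn y \<and> lv x = lv y \<and> V x = V y \<and> (BB x \<longleftrightarrow> BB y)"
  proof (cases "BB x")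
    case True
    then have BBy: "BB y" using pt_cl[of y x] assms by auto
    have dl: "dn x = dn y" "lv x = lv y" using SP_BB[OF assms(3) True BBy] by auto
    have BC: "BC x y" "BC y x" using pt_BB[OF assms(3) True BBy] pt_BB[of y x] assms(3) True BBy by auto
    have Ap: "Apart x = Apart y" using assms(3) by (simp add: Apart_def)
    have upA: "up x \<union> Apart x \<subseteq> up y \<union> Apart y" if "BC x y" "pt x = pt y" "x \<in> P" "BB x" for x y
    proof
      fix u assume u: "u \<in> up x \<union> Apart x"
      show "u \<in> up y \<union> Apart y"
      proof (cases "u \<in> Apart x")
        case True then show ?thesis using that by (simp add: Apart_def)
      next
        case False
        then have uu: "u \<in> P" "lt x u" using u by (auto simp: up_set_def)
        have "pt u \<noteq> pt x"
        proof
          assume pu: "pt u = pt x"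
          have lvl: "lv x < lv u" using lt_lv uu that by blast
          have "\<not> TT u" using False pu uu by (simp add: Apart_def)
          moreover have "\<not> BB u" using SP_BB[of u x] pu that lvl by auto
          ultimately show False using pt_cl[of u x] pu uu that by auto
        qed
        then have "lt y u" using UB[OF that(1) that(3) uu(1)] uu by simp
        then show ?thesis using uu by (simp add: up_set_def)
      qed
    qed
    have "up x \<union> Apart x = up y \<union> Apart y"
      using upA[of x y] upA[of y x] BC assms True BBy by auto
    then show ?thesis using dl True BBy by (simp add: V_def)
  next
    case False
    then have "\<not> BB y \<and> clone_rel P lt x y" using pt_cl[of x y] assms by auto
    then show ?thesis using False dn_lv assms by (auto simp: clone_rel_def V_def intro: antisym)
  qed
  have "Dn x = Dn y" using d by (auto simp: Dn_def down_set_def)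
  then have "m x = m y" using d assms by (simp add: m_def)
  moreover have "cc x = cc y" using d assms by (simp add: cc_def)
  ultimately show ?thesis using key_eq assms by simp
qed

lemma KPT: assumes "pt x = pt y" "TT x" "TT y" shows "key x = key y"
proof -
  have "key (bt x) = key (bt y)"
    using KP[of "bt x" "bt y"] bt_props[OF assms(2)] bt_props[OF assms(3)] assms(1) TB_excl by metis
  then show ?thesis using key_eq TT_P assms by (simp add: m_def cc_def)
qed

end

context tp begin

lemma nest: assumes "x \<in> P" "y \<in> P" "pt x \<noteq> pt y" shows "up x \<subseteq> up y \<or> up y \<subseteq> up x"
  using pt_BR[OF assms(1,2)] assms(3) unfolding bot_rel_def by blast

lemma SP_lv2: assumes "x \<in> P" "y \<in> P" "pt x = pt y" "lv x < lv y" shows "TT y \<and> BB x"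
proof -
  have nTx: "\<not> TT x \<or> \<not> TT y" using SP_TT[OF assms(3)] assms(4) by auto
  have ny: "\<not> (BB x \<and> BB y)" using SP_BB[OF assms(3)] assms(4) by auto
  have cl: "\<not> (\<not> TT y \<and> \<not> BB y)"
  proof
    assume a: "\<not> TT y \<and> \<not> BB y"
    then have "clone_rel P lt y x" using pt_cl[of y x] assms by auto
    then have "dn x = dn y" by (simp add: clone_rel_def)
    then show False using dn_lv[of x y] dn_lv[of y x] assms by simp
  qed
  have cl2: "\<not> (\<not> TT x \<and> \<not> BB x)" using pt_cl[of x y] assms cl by auto
  have "\<not> (TT x \<and> BB y)" using SP_TB[of x y] assms by auto
  then show ?thesis using nTx ny cl cl2 TB_excl by blast
qed

lemma Apart_up: assumes "BB x" "y \<in> P" "pt y \<noteq> pt x" "a \<in> Apart x" "lt y a" shows "Apart x \<subseteq> up y"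
proof
  fix a' assume a': "a' \<in> Apart x"
  have "TC a a'" using pt_TT[of a a'] a' assms(4) by (simp add: Apart_def)
  moreover have "pt y \<noteq> pt a" using assms by (simp add: Apart_def)
  ultimately have "lt y a'" using UT[of a a' y] assms by (simp add: Apart_def)
  then show "a' \<in> up y" using a' by (simp add: up_set_def Apart_def)
qed

lemma CC: assumes "x \<in> P" "y \<in> P" "\<not> TT x" "\<not> TT y" "pt x \<noteq> pt y" "up x \<subset> up y"
  shows "cc y < cc x"
proof -
  have cy: "card (V y) \<le> card P" using V_card[of y] assms by simp
  have cx: "card (V x) \<le> card P" using V_card[of x] assms by simp
  show ?thesis
  proof (cases "BB x")
    case True
    obtain a where a: "TT a" "pt a = pt x" "lt x a" using BB_ex(1)[OF True] by blast
    have "a \<in> up y" using a assms TT_P by (auto simp: up_set_def)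
    then have "Apart x \<subseteq> up y"
      using Apart_up[OF True assms(2), of a] assms a TT_P by (auto simp: Apart_def up_set_def)
    then have sub: "V x \<subseteq> up y" using True assms by (auto simp: V_def)
    show ?thesis
    proof (cases "BB y")
      case BBy: True
      obtain a' where a': "TT a'" "pt a' = pt y" "\<not> lt y a'" using BB_ex(2)[OF BBy] by blast
      have "a' \<in> V y" using a' BBy TT_P by (simp add: V_def Apart_def)
      moreover have "a' \<notin> V x" using a' assms True by (auto simp: V_def Apart_def up_set_def)
      ultimately have "V x \<subset> V y" using sub BBy by (auto simp: V_def)
      then have "card (V x) < card (V y)" using psubset_card_mono[OF finite_subset[OF V_sub fin]] by blast
      then show ?thesis using True BBy assms cy by (simp add: cc_def)
    next
      case False
      then have "V x \<subseteq> V y" using sub by (simp add: V_def)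
      then have "card (V x) \<le> card (V y)" using card_mono[OF finite_subset[OF V_sub fin]] by blast
      then show ?thesis using True False assms cy by (simp add: cc_def)
    qed
  next
    case False
    have "V x \<subset> V y" using False assms by (auto simp: V_def)
    then have "card (V x) < card (V y)" using psubset_card_mono[OF finite_subset[OF V_sub fin]] by blast
    have c1: "cc y \<le> 2 * (card P - card (V y)) + 1" using assms by (simp add: cc_def)
    have c2: "cc x = 2 * (card P - card (V x))" using False assms by (simp add: cc_def)
    show ?thesis using c1 c2 \<open>card (V x) < card (V y)\<close> cy by linarith
  qed
qed

lemma up_from_w: assumes "x \<in> P" "x' \<in> P" "w \<in> P" "lt w x'" "lv w + 1 = lv x" "\<not> lt w x"
  "lv x = lv x'" "x \<noteq> x'" shows "up x' \<subseteq> up x"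
proof
  fix u assume "u \<in> up x'"
  then have u: "u \<in> P" "lt x' u" by (auto simp: up_set_def)
  have lu: "lv x' < lv u" using lt_lv u assms by blast
  show "u \<in> up x"
  proof (cases "lv x + 2 \<le> lv u")
    case True then show ?thesis using lv_far u assms by (simp add: up_set_def)
  next
    case False
    then have lu1: "lv u = lv x + 1" using lu assms by simp
    show ?thesis
    proof (rule ccontr)
      assume "u \<notin> up x"
      then have nxu: "\<not> lt x u" using u by (simp add: up_set_def)
      show False
        apply (rule no31[OF assms(3) assms(2) u(1) assms(1) assms(4) u(2)])
        using assms nxu lu1 lt_lv[of x w] lt_lv[of x x'] lt_lv[of x' x] lt_lv[of u x] u
        by auto
    qed
  qed
qed

definition IND where "IND j \<longleftrightarrow>
  (\<forall>x y. x \<in> P \<and> y \<in> P \<and> lv x = j \<and> lv y = j \<and> pt x \<noteq> pt y \<longrightarrow> key x \<noteq> key y) \<and>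
  (\<forall>x y. x \<in> P \<and> y \<in> P \<and> lv x = j \<and> lv y = j \<and> pt x \<noteq> pt y \<and> key x < key y \<longrightarrow> up y \<subseteq> up x)"

lemma IND_M1: "IND j \<Longrightarrow> x \<in> P \<Longrightarrow> y \<in> P \<Longrightarrow> lv x = j \<Longrightarrow> lv y = j \<Longrightarrow> pt x \<noteq> pt y \<Longrightarrow> key x \<noteq> key y"
  unfolding IND_def by blast
lemma IND_M3: "IND j \<Longrightarrow> x \<in> P \<Longrightarrow> y \<in> P \<Longrightarrow> lv x = j \<Longrightarrow> lv y = j \<Longrightarrow> pt x \<noteq> pt y \<Longrightarrow> key x < key y \<Longrightarrow> up y \<subseteq> up x"
  unfolding IND_def by blast

lemma T1: assumes I: "IND j" and "a \<in> P" "b \<in> P" "TT b" "lv b = Suc j" "lv a = j" "pt a \<noteq> pt b"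
  shows "lt a b \<longleftrightarrow> key a < key (bt b)"
proof -
  note bp = bt_props[OF assms(4)]
  obtain a2 where a2: "a2 \<in> P" "TR b a2" "\<not> lt (bt b) a2" using bp(6) by blast
  have lb: "lv (bt b) = j" using bp(5) assms by simp
  have ne: "key a \<noteq> key (bt b)" using IND_M1[OF I assms(2) bp(1)] assms lb bp(4) by simp
  show ?thesis
  proof (cases "key a < key (bt b)")
    case True
    then have "up (bt b) \<subseteq> up a" using IND_M3[OF I assms(2) bp(1)] assms lb bp(4) by simp
    then show ?thesis using True bp(2) assms by (auto simp: up_set_def)
  next
    case False
    then have lt: "key (bt b) < key a" using ne by simp
    then have sub: "up a \<subseteq> up (bt b)" using IND_M3[OF I bp(1) assms(2)] assms lb bp(4) by simp
    have "\<not> lt a b"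
    proof
      assume ab: "lt a b"
      have "TC b a2" using TC_e a2 assms by simp
      then have "lt a a2" using UT[of b a2 a] ab assms by simp
      then show False using sub a2 by (auto simp: up_set_def)
    qed
    then show ?thesis using False by simp
  qed
qed

lemma M4: assumes I: "IND j" and "x \<in> P" "y \<in> P" "lv x = j" "lv y = Suc j" "\<not> TT y"
  shows "lt x y \<longleftrightarrow> key x \<le> m y"
proof -
  have l2: "2 \<le> lv y" using lv_ge1[OF assms(2)] assms by simp
  show ?thesis
  proof
    assume "lt x y"
    then have "x \<in> Dn x" if False using that by simp
    have "x \<in> Dn y" using \<open>lt x y\<close> assms by (simp add: Dn_def)
    then show "key x \<le> m y" using m_max(2)[OF assms(3,6) l2] by simp
  next
    assume le: "key x \<le> m y"
    obtain w where w: "w \<in> Dn y" "m y = key w" using m_max(1)[OF assms(3,6) l2] by blast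
    have wP: "w \<in> P" "lt w y" "lv w = j" using w assms by (auto simp: Dn_def)
    have pyw: "pt y \<noteq> pt w" using SP_lv2[of w y] wP assms by auto
    show "lt x y"
    proof (cases "pt x = pt w")
      case True
      then show ?thesis using SP_up[of x w y] wP assms pyw by simp
    next
      case False
      then have "key x \<noteq> key w" using IND_M1[OF I assms(2) wP(1)] assms wP by simp
      then have "key x < key w" using le w by simp
      then have "up w \<subseteq> up x" using IND_M3[OF I assms(2) wP(1)] assms wP False by simp
      then show ?thesis using wP assms by (auto simp: up_set_def)
    qed
  qed
qed

end

context tp begin

lemma TT_lv2: "TT x \<Longrightarrow> 2 \<le> lv x"
  using bt_props(5)[of x] bt_props(1)[of x] lv_ge1[of "bt x"] by simp

lemma M3_Suc: assumes H: "j = 0 \<or> IND j" and xP: "x \<in> P" and yP: "x' \<in> P"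
  and l: "lv x = Suc j" "lv x' = Suc j" and pd: "pt x \<noteq> pt x'" and kl: "key x < key x'"
  shows "up x' \<subseteq> up x"
proof -
  have mlen: "length (m x) = j" "length (m x') = j" using m_len[OF xP] m_len[OF yP] l by simp_all
  have "m x @ [cc x] < m x' @ [cc x']" using kl key_eq xP yP by simp
  then have dis: "m x < m x' \<or> (m x = m x' \<and> cc x < cc x')"
    using LX3[of "m x" "m x'" "cc x" "cc x'"] mlen by simp
  have neq: "x \<noteq> x'" using pd by blast
  show ?thesis
  proof (cases "m x < m x'")
    case True
    have j0: "j \<noteq> 0" using True mlen by auto
    then have I: "IND j" using H by simp
    obtain w' where w': "w' \<in> P" "lt w' x'" "lv w' = j" "key w' = m x'"
    proof (cases "TT x'")
      case True
      then show ?thesis using that bt_props[OF True] l by (simp add: m_def)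
    next
      case False
      have "2 \<le> lv x'" using l j0 by simp
      then obtain w where "w \<in> Dn x'" "m x' = key w" using m_max(1)[OF yP False] by blast
      then show ?thesis using that l by (auto simp: Dn_def)
    qed
    have nw: "\<not> lt w' x"
    proof (cases "TT x")
      case TTx: True
      have mx: "m x = key (bt x)" using TTx by (simp add: m_def)
      have pw: "pt w' \<noteq> pt x"
      proof
        assume pe: "pt w' = pt x"
        have "BB w'" using SP_lv2[of w' x] pe w' xP l by simp
        then have "\<not> TT w'" using TB_excl by blast
        moreover have "\<not> TT (bt x)" using bt_props(3)[OF TTx] TB_excl by blast
        ultimately have "key w' = key (bt x)" using KP[of w' "bt x"] w' bt_props[OF TTx] pe by simp
        then show False using True w' mx by simp
      qed
      have "lt w' x \<longleftrightarrow> key w' < key (bt x)" using T1[OF I w'(1) xP TTx] l w' pw by simp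
      then show ?thesis using True w' mx by simp
    next
      case False
      have "2 \<le> lv x" using l j0 by simp
      show ?thesis
      proof
        assume "lt w' x"
        then have "w' \<in> Dn x" using w' l by (simp add: Dn_def)
        then have "key w' \<le> m x" using m_max(2)[OF xP False \<open>2 \<le> lv x\<close>] by blast
        then show False using True w' by simp
      qed
    qed
    show ?thesis using up_from_w[OF xP yP w'(1,2) _ nw _ neq] w' l by simp
  next
    case False
    then have me: "m x = m x'" and cl: "cc x < cc x'" using dis by auto
    show ?thesis
    proof (cases "TT x")
      case TTx: True
      have nTy: "\<not> TT x'" using cl TTx by (auto simp: cc_def)
      have j0: "j \<noteq> 0" using TT_lv2[OF TTx] l by simp
      then have I: "IND j" using H by simp
      have "2 \<le> lv x'" using l j0 by simp
      then obtain w where w: "w \<in> Dn x'" "m x' = key w" using m_max(1)[OF yP nTy] by blast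
      have wP: "w \<in> P" "lt w x'" "lv w = j" using w l by (auto simp: Dn_def)
      have kw: "key w = key (bt x)" using w me TTx by (simp add: m_def)
      have lb: "lv (bt x) = j" using bt_props(5)[OF TTx] l by simp
      have "pt w = pt (bt x)" using IND_M1[OF I wP(1) bt_props(1)[OF TTx]] wP lb kw by blast
      then have pw: "pt w = pt x" using bt_props(4)[OF TTx] by simp
      have BBw: "BB w" using SP_lv2[of w x] pw wP xP l by simp
      obtain b' where b': "BB b'" "pt b' = pt x" "\<not> lt b' x" using TT_ex(2)[OF TTx] by blast
      have "BC w b'" using pt_BB[of w b'] BBw b' pw by simp
      moreover have "pt x' \<noteq> pt w" using pw pd by simp
      ultimately have "lt b' x'" using UB[of w b' x'] wP yP by simp
      moreover have "lv b' + 1 = lv x" using SP_TB[of x b'] b' TTx by simp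
      ultimately show ?thesis using up_from_w[OF xP yP BB_P[OF b'(1)]] b' l neq by simp
    next
      case nTx: False
      have nTy: "\<not> TT x'" using cl by (auto simp: cc_def)
      show ?thesis
      proof (rule ccontr)
        assume "\<not> up x' \<subseteq> up x"
        then have "up x \<subset> up x'" using nest[OF xP yP pd] by blast
        then have "cc x' < cc x" using CC[OF xP yP nTx nTy pd] by simp
        then show False using cl by simp
      qed
    qed
  qed
qed


lemma M1_Suc: assumes H: "j = 0 \<or> IND j" and xP: "x \<in> P" and yP: "x' \<in> P"
  and l: "lv x = Suc j" "lv x' = Suc j" and pd: "pt x \<noteq> pt x'"
  shows "key x \<noteq> key x'"
proof
  assume eq: "key x = key x'"
  then have "m x @ [cc x] = m x' @ [cc x']" using key_eq xP yP by simp
  then have me: "m x = m x'" and ce: "cc x = cc x'" by simp_all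
  show False
  proof (cases "TT x")
    case TTx: True
    show False
    proof (cases "TT x'")
      case TTy: True
      have j0: "j \<noteq> 0" using TT_lv2[OF TTx] l by simp
      then have I: "IND j" using H by simp
      have "key (bt x) = key (bt x')" using me TTx TTy by (simp add: m_def)
      moreover have "pt (bt x) \<noteq> pt (bt x')" using bt_props(4)[OF TTx] bt_props(4)[OF TTy] pd by simp
      ultimately show False using IND_M1[OF I bt_props(1)[OF TTx] bt_props(1)[OF TTy]]
          bt_props(5)[OF TTx] bt_props(5)[OF TTy] l by simp
    next
      case False
      then show False using ce cc_pos[OF yP False] TTx by (simp add: cc_def)
    qed
  next
    case nTx: False
    show False
    proof (cases "TT x'")
      case True
      then show False using ce cc_pos[OF xP nTx] by (simp add: cc_def)
    next
      case nTy: False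
      have upeq: "up x = up x'"
      proof (rule ccontr)
        assume ne: "up x \<noteq> up x'"
        then consider "up x \<subset> up x'" | "up x' \<subset> up x" using nest[OF xP yP pd] by blast
        then show False
        proof cases
          case 1 then show False using CC[OF xP yP nTx nTy pd] ce by simp
        next
          case 2 then show False using CC[OF yP xP nTy nTx] pd ce by simp
        qed
      qed
      have nBgen: "\<not> BB u" if "u \<in> P" "v \<in> P" "pt u \<noteq> pt v" "up u = up v" for u v
      proof
        assume BBu: "BB u"
        obtain a1 where a1: "TT a1" "pt a1 = pt u" "lt u a1" using BB_ex(1)[OF BBu] by blast
        have "a1 \<in> up v" using a1 that TT_P by (auto simp: up_set_def)
        then have "lt v a1" by (simp add: up_set_def)
        moreover have "a1 \<in> Apart u" using a1 TT_P by (simp add: Apart_def)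
        ultimately have sub: "Apart u \<subseteq> up v" using Apart_up[OF BBu that(2)] that by simp
        obtain a2 where a2: "TT a2" "pt a2 = pt u" "\<not> lt u a2" using BB_ex(2)[OF BBu] by blast
        have "a2 \<in> Apart u" using a2 TT_P by (simp add: Apart_def)
        then have "a2 \<in> up u" using sub that by blast
        then show False using a2 by (simp add: up_set_def)
      qed
      have nBx: "\<not> BB x" using nBgen[OF xP yP pd upeq] .
      have nBy: "\<not> BB x'" using nBgen[OF yP xP] pd upeq by simp
      have dneq: "dn x = dn x'"
      proof -
        have "lt z x \<longleftrightarrow> lt z x'" if zP: "z \<in> P" for z
        proof (cases "lv z < j")
          case True
          then show ?thesis using lv_far[OF zP xP] lv_far[OF zP yP] l by simp
        next
          case False
          show ?thesis
          proof (cases "lv z = j")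
            case True
            then have j0: "j \<noteq> 0" using lv_ge1[OF zP] by simp
            then have I: "IND j" using H by simp
            show ?thesis using M4[OF I zP xP True l(1) nTx] M4[OF I zP yP True l(2) nTy] me by simp
          next
            case False
            then have "\<not> lt z x" "\<not> lt z x'" using \<open>\<not> lv z < j\<close> lt_lv[OF zP xP] lt_lv[OF zP yP] l by auto
            then show ?thesis by simp
          qed
        qed
        then show ?thesis by (auto simp: down_set_def)
      qed
      have "clone_rel P lt x x'" using dneq upeq by (simp add: clone_rel_def)
      then have "pt x = pt x'" using nTx nTy nBx nBy by (auto simp: pt_def clone_rel_def)
      then show False using pd by simp
    qed
  qed
qed

lemma IND_all: "IND j"
proof (induction j)
  case 0 then show ?case using lv_ge1 by (fastforce simp: IND_def)
next
  case (Suc j)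
  show ?case unfolding IND_def using M1_Suc[of j] M3_Suc[of j] Suc by blast
qed

lemma M2: assumes xP: "x \<in> P" and yP: "y \<in> P" and l: "lv y = lv x + 1" and pd: "pt x \<noteq> pt y"
  shows "lt x y \<longleftrightarrow> key x < key y"
proof -
  note I = IND_all[of "lv x"]
  have lk: "length (key x) = lv x" using key_len xP by simp
  show ?thesis
  proof (cases "TT y")
    case True
    have ky: "key y = key (bt y) @ [0]" using key_eq[OF yP] True by (simp add: m_def cc_def)
    have lb: "lv (bt y) = lv x" using bt_props(5)[OF True] l by simp
    have "length (key (bt y)) = lv x" using key_len bt_props(1)[OF True] lb by simp
    then have "key x < key y \<longleftrightarrow> key x \<le> key (bt y)" using LX1 lk ky by simp
    moreover have "key x \<noteq> key (bt y)"
      using IND_M1[OF I xP bt_props(1)[OF True]] lb bt_props(4)[OF True] pd by simp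
    moreover have "lt x y \<longleftrightarrow> key x < key (bt y)" using T1[OF I xP yP True] l pd by simp
    ultimately show ?thesis by auto
  next
    case False
    have ky: "key y = m y @ [cc y]" using key_eq[OF yP] .
    have "length (m y) = lv x" using m_len[OF yP] l by simp
    then have "key x < key y \<longleftrightarrow> key x \<le> m y" using LX1 lk ky by simp
    moreover have "lt x y \<longleftrightarrow> key x \<le> m y" using M4[OF I xP yP] l False by simp
    ultimately show ?thesis by simp
  qed
qed

end

context tp begin

definition pk where "pk X = key (SOME x. x \<in> X \<and> \<not> TT x)"

lemma pk_pt: assumes "x \<in> P" "\<not> TT x" shows "pk (pt x) = key x"
proof -
  have ex: "\<exists>z. z \<in> pt x \<and> \<not> TT z" using assms pt_mem by blast
  define z where "z = (SOME z. z \<in> pt x \<and> \<not> TT z)"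
  have z: "z \<in> pt x" "\<not> TT z" using someI_ex[OF ex] by (simp_all add: z_def)
  have zP: "z \<in> P" using z pt_sub by blast
  have "pt z = pt x" using pt_eq[OF assms(1) z(1)] .
  then have "key z = key x" using KP[OF zP assms(1)] z assms by simp
  then show ?thesis by (simp add: pk_def z_def)
qed

definition nt where "nt x = (if TT x then bt x else x)"

lemma nt_props: assumes "x \<in> P" shows "nt x \<in> P" "\<not> TT (nt x)" "pt (nt x) = pt x"
  "pk (pt x) = key (nt x)" "lv (nt x) = (if TT x then lv x - 1 else lv x)"
proof -
  show a: "nt x \<in> P" "\<not> TT (nt x)" "pt (nt x) = pt x"
    using assms bt_props[of x] TB_excl by (auto simp: nt_def)
  show "pk (pt x) = key (nt x)" using pk_pt[OF a(1,2)] a(3) by simp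
  show "lv (nt x) = (if TT x then lv x - 1 else lv x)" using bt_props(5)[of x] by (auto simp: nt_def)
qed

lemma key_pk: assumes "x \<in> P" shows "key x = (if TT x then pk (pt x) @ [0] else pk (pt x))"
  using nt_props[OF assms] key_eq[OF assms] by (auto simp: nt_def m_def cc_def)

lemma pk_inj: assumes "x \<in> P" "y \<in> P" "pt x \<noteq> pt y" shows "pk (pt x) \<noteq> pk (pt y)"
proof -
  note a = nt_props[OF assms(1)] and b = nt_props[OF assms(2)]
  show ?thesis
  proof (cases "lv (nt x) = lv (nt y)")
    case True
    then show ?thesis using IND_M1[OF IND_all a(1) b(1)] a b assms by simp
  next
    case False
    then show ?thesis using key_len a(1) b(1) a(4) b(4) by metis
  qed
qed

lemma main_adj: assumes xP: "x \<in> P" and yP: "y \<in> P" and l: "lv y = lv x + 1" and pd: "pt x \<noteq> pt y"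
  shows "lt x y \<longleftrightarrow> pk (pt x) < pk (pt y)"
proof -
  define p where "p = pk (pt x)"
  define q where "q = pk (pt y)"
  have lp: "length p = (if TT x then lv x - 1 else lv x)"
    using nt_props[OF xP] key_len p_def by simp
  have lq: "length q = (if TT y then lv y - 1 else lv y)"
    using nt_props[OF yP] key_len q_def by simp
  have pq: "p \<noteq> q" using pk_inj[OF xP yP pd] p_def q_def by simp
  have kx: "key x = (if TT x then p @ [0] else p)" using key_pk[OF xP] p_def by simp
  have ky: "key y = (if TT y then q @ [0] else q)" using key_pk[OF yP] q_def by simp
  have lx2: "TT x \<Longrightarrow> 2 \<le> lv x" using TT_lv2 by simp
  have "key x < key y \<longleftrightarrow> p < q"
  proof (cases "TT x")
    case TTx: True
    show ?thesis
    proof (cases "TT y")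
      case TTy: True
      have ne: "key x \<noteq> key (bt y)"
        using IND_M1[OF IND_all xP bt_props(1)[OF TTy]] bt_props(4,5)[OF TTy] l pd by simp
      have "key (bt y) = q" using nt_props(4)[OF yP] TTy q_def by (simp add: nt_def)
      then have ne2: "p @ [0] \<noteq> q" using ne kx TTx by simp
      have "p @ [0] < q @ [0] \<longleftrightarrow> p @ [0] \<le> q" using LX1[of "p @ [0]" q 0] lp lq TTx TTy l lx2[OF TTx] by simp
      also have "\<dots> \<longleftrightarrow> p @ [0] < q" using ne2 by auto
      also have "\<dots> \<longleftrightarrow> p < q" using LX2[of q p] pq ne2 by auto
      finally show ?thesis using kx ky TTx TTy by simp
    next
      case nTy: False
      have "length q \<noteq> length (p @ [0])" using lp lq TTx nTy l lx2[OF TTx] by simp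
      then have "q \<noteq> p @ [0]" by metis
      then have "p @ [0] < q \<longleftrightarrow> p < q" using LX2[of q p] pq by auto
      then show ?thesis using kx ky TTx nTy by simp
    qed
  next
    case nTx: False
    show ?thesis
    proof (cases "TT y")
      case TTy: True
      have "p < q @ [0] \<longleftrightarrow> p \<le> q" using LX1[of p q 0] lp lq nTx TTy l by simp
      then show ?thesis using kx ky nTx TTy pq by auto
    next
      case False then show ?thesis using kx ky nTx by simp
    qed
  qed
  then show ?thesis using M2[OF xP yP l pd] p_def q_def by simp
qed

end

context tp begin

lemma comp_tcs: "component P (top_rel P lt) x = tcs x"
  by (simp add: component_def tcs_def)
lemma comp_bcs: "component P (bot_rel P lt) x = bcs x"
  by (simp add: component_def bcs_def)

lemma card2: "finite A \<Longrightarrow> a \<in> A \<Longrightarrow> b \<in> A \<Longrightarrow> a \<noteq> b \<Longrightarrow> 2 \<le> card A"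
  using card_mono[of A "{a, b}"] by auto

lemma tangle_TT: assumes "TT x" shows "is_tangle P lt (pt x)"
proof -
  obtain b2 a2 where c: "cr (bt x) x b2 a2" using bt_cr assms by blast
  have P: "x \<in> P" "a2 \<in> P" "bt x \<in> P" "b2 \<in> P" using c by (auto simp: cr_def)
  have tr: "TR x a2" using cr_top c by blast
  have br: "BR (bt x) b2" using cr_bot c by blast
  have i1: "x \<noteq> a2" "\<not> lt x a2" "\<not> lt a2 x" using TR_inc[OF P(1,2) tr] by auto
  have i2: "bt x \<noteq> b2" "\<not> lt (bt x) b2" "\<not> lt b2 (bt x)" using BR_inc[OF P(3,4) br] by auto
  have cl: "lt (bt x) x" "lt b2 a2" "\<not> lt (bt x) a2" "\<not> lt b2 x" using c by (auto simp: cr_def)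
  have i3: "\<not> lt a2 (bt x)" using trans[of a2 "bt x" x] P cl i1 by blast
  have i4: "\<not> lt x b2" using trans[of x b2 a2] P cl i1 by blast
  have ne3: "bt x \<noteq> a2" using cl i1 by auto
  have ne4: "b2 \<noteq> x" using cl i1 by auto
  have top: "is_top P lt (tcs x)"
    unfolding is_top_def comp_tcs
    using P tr TC_e card2[of "tcs x" x a2] fin i1 by (auto simp: tcs_def)
  have bot: "is_bottom P lt (bcs (bt x))"
    unfolding is_bottom_def comp_bcs
    using P br BC_e card2[of "bcs (bt x)" "bt x" b2] fin i2 by (auto simp: bcs_def)
  have x1: "x \<in> tcs x" "a2 \<in> tcs x" "bt x \<in> bcs (bt x)" "b2 \<in> bcs (bt x)"
    using P tr br TC_e BC_e by (auto simp: tcs_def bcs_def)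
  have mt: "matched lt (tcs x) (bcs (bt x))"
    unfolding matched_def incomp_def
    using x1 i1 i2 i3 i4 ne3 ne4 cl by blast
  have "pt x = tcs x \<union> bcs (bt x)" using assms by (simp add: pt_def)
  then show ?thesis using top bot mt by (auto simp: is_tangle_def)
qed

lemma tangle_char: assumes "is_tangle P lt T" shows "\<exists>x. TT x \<and> T = pt x"
proof -
  obtain A B where AB: "is_top P lt A" "is_bottom P lt B" "matched lt A B" "T = A \<union> B"
    using assms by (auto simp: is_tangle_def)
  obtain a where a: "a \<in> P" "A = tcs a" using AB(1) by (auto simp: is_top_def comp_tcs)
  obtain b where b: "b \<in> P" "B = bcs b" using AB(2) by (auto simp: is_bottom_def comp_bcs)
  obtain a1 a2 b1 b2 where m: "a1 \<in> A" "a2 \<in> A" "b1 \<in> B" "b2 \<in> B" "lt b1 a1" "lt b2 a2"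
     "\<not> lt b1 a2" "\<not> lt b2 a1" using AB(3) unfolding matched_def incomp_def by blast
  have c: "cr b1 a1 b2 a2" using m a b by (auto simp: cr_def tcs_def bcs_def)
  have TT: "TT a1" using cr_TB c by blast
  have "TC a a1" using m a by (simp add: tcs_def)
  then have A: "A = tcs a1" using a tcs_eq by simp
  have "BC b b1" using m b by (simp add: bcs_def)
  then have B: "B = bcs b1" using b bcs_eq by simp
  obtain c2 a3 where c2: "cr (bt a1) a1 c2 a3" using bt_cr TT by blast
  have "BC (bt a1) b1" using U1[OF c2 c] .
  then have "bcs (bt a1) = bcs b1" using bcs_eq by simp
  then have "T = pt a1" using A B AB(4) TT by (simp add: pt_def)
  then show ?thesis using TT by blast
qed

lemma in_tangle_iff: assumes "x \<in> P" shows "in_tangle P lt x \<longleftrightarrow> TT x \<or> BB x"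
proof
  assume "in_tangle P lt x"
  then obtain T where T: "is_tangle P lt T" "x \<in> T" by (auto simp: in_tangle_def)
  obtain y where y: "TT y" "T = pt y" using tangle_char[OF T(1)] by blast
  have "pt x = pt y" using pt_eq[of y x] T y TT_P by simp
  then show "TT x \<or> BB x" using pt_cl[of x y] y assms TT_P by auto
next
  assume "TT x \<or> BB x"
  then show "in_tangle P lt x"
  proof
    assume "TT x" then show ?thesis using tangle_TT pt_mem assms by (auto simp: in_tangle_def)
  next
    assume BBx: "BB x"
    obtain b2 a2 where c: "cr x (at x) b2 a2" using at_cr BBx by blast
    have "TT (at x)" using cr_TB c by blast
    moreover have "pt x = pt (at x)" using pt_cr c by blast
    ultimately show ?thesis using tangle_TT pt_mem assms by (auto simp: in_tangle_def)
  qed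
qed

lemma parts: "{X. is_clone_set P lt X \<or> is_tangle P lt X} = pt ` P"
proof
  show "{X. is_clone_set P lt X \<or> is_tangle P lt X} \<subseteq> pt ` P"
  proof
    fix X assume "X \<in> {X. is_clone_set P lt X \<or> is_tangle P lt X}"
    then consider "is_clone_set P lt X" | "is_tangle P lt X" by blast
    then show "X \<in> pt ` P"
    proof cases
      case 1
      then obtain a where a: "a \<in> P" "\<not> in_tangle P lt a"
        "X = {b\<in>P. \<not> in_tangle P lt b \<and> clone_rel P lt a b}" by (auto simp: is_clone_set_def)
      have "X = pt a" using a in_tangle_iff by (auto simp: pt_def)
      then show ?thesis using a by blast
    next
      case 2 then show ?thesis using tangle_char TT_P by blast
    qed
  qed
next
  show "pt ` P \<subseteq> {X. is_clone_set P lt X \<or> is_tangle P lt X}"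
  proof
    fix X assume "X \<in> pt ` P"
    then obtain x where x: "x \<in> P" "X = pt x" by blast
    show "X \<in> {X. is_clone_set P lt X \<or> is_tangle P lt X}"
    proof (cases "TT x \<or> BB x")
      case True
      then have "in_tangle P lt x" using in_tangle_iff x by simp
      then obtain T where T: "is_tangle P lt T" "x \<in> T" by (auto simp: in_tangle_def)
      obtain y where y: "TT y" "T = pt y" using tangle_char[OF T(1)] by blast
      have "pt x = pt y" using pt_eq[of y x] T y TT_P by simp
      then show ?thesis using T y x by simp
    next
      case False
      then have "X = {b\<in>P. \<not> in_tangle P lt b \<and> clone_rel P lt x b}"
        using x in_tangle_iff by (auto simp: pt_def)
      moreover have "\<not> in_tangle P lt x" using False in_tangle_iff x by simp
      ultimately show ?thesis using x by (auto simp: is_clone_set_def)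
    qed
  qed
qed

lemma main: "\<exists>Xs :: 'a set list. distinct Xs \<and>
           set Xs = {X. is_clone_set P lt X \<or> is_tangle P lt X} \<and>
           (\<forall>i j a b. i < length Xs \<longrightarrow> j < length Xs \<longrightarrow> i \<noteq> j \<longrightarrow>
              a \<in> Xs ! i \<longrightarrow> b \<in> Xs ! j \<longrightarrow>
              (lt a b \<longleftrightarrow> (lvl P lt a + 2 \<le> lvl P lt b \<or>
                           (lvl P lt a + 1 = lvl P lt b \<and> i < j))))"
proof -
  have finS: "finite (pt ` P)" using fin by simp
  obtain xs0 where xs0: "distinct xs0" "set xs0 = pt ` P" using finite_distinct_list[OF finS] by metis
  define Xs where "Xs = sort_key pk xs0"
  have d: "distinct Xs" using xs0 by (simp add: Xs_def distinct_sort)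
  have s: "set Xs = pt ` P" using xs0 by (simp add: Xs_def)
  have so: "sorted (map pk Xs)" by (simp add: Xs_def)
  have memX: "a \<in> P \<and> X = pt a" if h: "X \<in> set Xs" "a \<in> X" for X a
  proof -
    obtain x where x: "x \<in> P" "X = pt x" using h(1) s by auto
    have "a \<in> P" using x h pt_sub by blast
    then show ?thesis using pt_eq[of x a] x h by simp
  qed
  have ord: "pk (Xs ! i) < pk (Xs ! j)" if h: "i < j" "j < length Xs" for i j
  proof -
    have "pk (Xs ! i) \<le> pk (Xs ! j)"
      using sorted_nth_mono[OF so, of i j] h by simp
    moreover have "Xs ! i \<noteq> Xs ! j" using d h nth_eq_iff_index_eq by fastforce
    moreover obtain x y where "x \<in> P" "Xs ! i = pt x" "y \<in> P" "Xs ! j = pt y"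
      using s h nth_mem[of i Xs] nth_mem[of j Xs] by (metis imageE less_trans)
    ultimately show ?thesis using pk_inj by fastforce
  qed
  have cond: "lt a b \<longleftrightarrow> (lvl P lt a + 2 \<le> lvl P lt b \<or> (lvl P lt a + 1 = lvl P lt b \<and> i < j))"
    if ij: "i < length Xs" "j < length Xs" "i \<noteq> j" "a \<in> Xs ! i" "b \<in> Xs ! j" for i j a b
  proof -
    have A: "a \<in> P" "Xs ! i = pt a" using memX[OF nth_mem[OF ij(1)] ij(4)] by auto
    have B: "b \<in> P" "Xs ! j = pt b" using memX[OF nth_mem[OF ij(2)] ij(5)] by auto
    have "Xs ! i \<noteq> Xs ! j" using d ij(1,2,3) by (simp add: nth_eq_iff_index_eq)
    then have pd: "pt a \<noteq> pt b" using A B by simp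
    have ijk: "i < j \<longleftrightarrow> pk (pt a) < pk (pt b)"
    proof
      assume "i < j" then show "pk (pt a) < pk (pt b)" using ord[of i j] ij A B by simp
    next
      assume "pk (pt a) < pk (pt b)"
      moreover have "\<not> j < i \<or> \<not> pk (pt a) < pk (pt b)" using ord[of j i] ij A B by auto
      ultimately show "i < j" using ij by auto
    qed
    have lv: "lvl P lt a = lv a" "lvl P lt b = lv b" using lvl_eq A B by auto
    show ?thesis
    proof (cases "lv a + 2 \<le> lv b")
      case True then show ?thesis using lv_far A B lv by simp
    next
      case False
      show ?thesis
      proof (cases "lv b = lv a + 1")
        case True then show ?thesis using main_adj[OF A(1) B(1) True pd] ijk lv by simp
      next
        case False
        then have "lv b \<le> lv a" using \<open>\<not> lv a + 2 \<le> lv b\<close> by simp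
        then show ?thesis using lt_lv[OF A(1) B(1)] lv \<open>\<not> lv a + 2 \<le> lv b\<close> False by auto
      qed
    qed
  qed
  have "set Xs = {X. is_clone_set P lt X \<or> is_tangle P lt X}" using s parts by simp
  then show ?thesis using d cond by blast
qed

end

theorem theorem3p3:
  fixes P :: "'a set" and lt :: "'a \<Rightarrow> 'a \<Rightarrow> bool"
  assumes "finite P" and "strict_poset P lt" and "free_3_1 P lt"
  shows "\<exists>Xs :: 'a set list. distinct Xs \<and>
           set Xs = {X. is_clone_set P lt X \<or> is_tangle P lt X} \<and>
           (\<forall>i j a b. i < length Xs \<longrightarrow> j < length Xs \<longrightarrow> i \<noteq> j \<longrightarrow>
              a \<in> Xs ! i \<longrightarrow> b \<in> Xs ! j \<longrightarrow>
              (lt a b \<longleftrightarrow> (lvl P lt a + 2 \<le> lvl P lt b \<or>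
                           (lvl P lt a + 1 = lvl P lt b \<and> i < j))))"
proof -
  interpret tp P lt using assms by (rule tp.intro)
  show ?thesis by (rule main)
qed

end
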